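(* For every $z\in\mathbb{C}\setminus[0,\infty)$ and every $x\in\mathbb{Z}_+$, $$\xi_z(x)=\int_0^\infty e^{-\eta}(\eta-z)^{-1}\,[\phi_\eta(x)-\phi_z(x)]\,\mathrm{d}\eta .$$
   Context: $\mathbb{Z}_+=\{0,1,2,\dots\}$. $L_0$ is the operator on $\ell^2(\mathbb{Z}_+)$ given by $$L_0v(x)=-(x+1)v(x+1)+(2x+1)v(x)-xv(x-1)\quad (x>0),\qquad L_0v(0)=-v(1)+v(0),$$ with domain $\{v:\sum_x x^2|v(x)|^2<\infty\}$. $\overline{L_0}$ is its self-adjoint closure. $\phi_z(x)=\sum_{k=0}^{x}\binom{x}{k}\frac{(-z)^k}{k!}$ (Laguerre polynomials, defined for all $z\in\mathbb{C}$). $\psi_z=(\overline{L_0}-z)^{-1}\chi_0$ is the resolvent vector, and $\xi_z:=\psi_z-\psi_z(0)\phi_z$ is the auxiliary resolvent vector. *)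

theory Defs
  imports "HOL-Analysis.Analysis"
begin

text \<open>Sequences on Z_+ are functions nat => complex.\<close>

definition l2 :: "(nat \<Rightarrow> complex) \<Rightarrow> bool" where
  "l2 v \<longleftrightarrow> summable (\<lambda>x. (norm (v x))^2)"

definition l2norm :: "(nat \<Rightarrow> complex) \<Rightarrow> real" where
  "l2norm v = sqrt (\<Sum>x. (norm (v x))^2)"

definition dom_L0 :: "(nat \<Rightarrow> complex) \<Rightarrow> bool" where
  "dom_L0 v \<longleftrightarrow> l2 v \<and> summable (\<lambda>x. (real x)^2 * (norm (v x))^2)"

definition L0 :: "(nat \<Rightarrow> complex) \<Rightarrow> nat \<Rightarrow> complex" where
  "L0 v x = (if x = 0 then - v 1 + v 0
             else - of_nat (x+1) * v (x+1) + of_nat (2*x+1) * v x - of_nat x * v (x-1))"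

definition l2_conv :: "(nat \<Rightarrow> nat \<Rightarrow> complex) \<Rightarrow> (nat \<Rightarrow> complex) \<Rightarrow> bool" where
  "l2_conv vs u \<longleftrightarrow> l2 u \<and> (\<forall>n. l2 (vs n)) \<and>
     ((\<lambda>n. l2norm (\<lambda>x. vs n x - u x)) \<longlonglongrightarrow> 0)"

definition L0_closure_graph :: "(nat \<Rightarrow> complex) \<Rightarrow> (nat \<Rightarrow> complex) \<Rightarrow> bool" where
  "L0_closure_graph u w \<longleftrightarrow>
     (\<exists>vs. (\<forall>n. dom_L0 (vs n)) \<and> l2_conv vs u \<and> l2_conv (\<lambda>n. L0 (vs n)) w)"

definition chi0 :: "nat \<Rightarrow> complex" where
  "chi0 x = (if x = 0 then 1 else 0)"

text \<open>Resolvent vector psi_z = (closure L_0 - z)^{-1} chi_0: the unique u in the domain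
  of the closure with (closure L_0) u - z u = chi_0.\<close>
definition psi :: "complex \<Rightarrow> nat \<Rightarrow> complex" where
  "psi z = (THE u. \<exists>w. L0_closure_graph u w \<and> (\<forall>x. w x - z * u x = chi0 x))"

definition phi :: "complex \<Rightarrow> nat \<Rightarrow> complex" where
  "phi z x = (\<Sum>k=0..x. of_nat (x choose k) * (-z)^k / of_nat (fact k))"

definition xi :: "complex \<Rightarrow> nat \<Rightarrow> complex" where
  "xi z x = psi z x - psi z 0 * phi z x"

end

theory Submission
  imports Defs
begin

definition good :: "(real \<Rightarrow> complex) \<Rightarrow> bool" where
  "good f \<longleftrightarrow> continuous_on {0..} f \<and> (\<exists>C k. \<forall>t\<ge>0. norm (f t) \<le> C * (1+t)^k)"

lemma goodI: "continuous_on {0..} f \<Longrightarrow> (\<And>t. t \<ge> 0 \<Longrightarrow> norm (f t) \<le> C*(1+t)^k) \<Longrightarrow> good f"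
  unfolding good_def by blast

lemma pow_bound:
  fixes t :: real assumes "t \<ge> 0" shows "(1+t)^k \<le> 2^k * (1 + t^k)"
proof (cases "t \<le> 1")
  case True
  have "(1+t)^k \<le> 2^k" using True assms by (intro power_mono) auto
  also have "\<dots> \<le> 2^k * (1 + t^k)" using assms by simp
  finally show ?thesis .
next
  case False
  have "(1+t)^k \<le> (2*t)^k" using False assms by (intro power_mono) auto
  also have "\<dots> = 2^k * t^k" by (simp add: power_mult_distrib)
  also have "\<dots> \<le> 2^k * (1 + t^k)" by simp
  finally show ?thesis .
qed

lemma tk_integral: "((\<lambda>t::real. t^k * exp(-t)) has_integral fact k) {0..}"
proof -
  have "((\<lambda>t. t powr (real k + 1 - 1) / exp t) has_integral Gamma (real k + 1)) {0..}"
    by (rule Gamma_integral_real) simp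
  moreover have "Gamma (real k + 1) = fact k"
    using Gamma_fact[of k, where 'a=real] by (simp add: add.commute)
  ultimately have A: "((\<lambda>t. t powr (real k) / exp t) has_integral fact k) {0..}" by simp
  show ?thesis
    using A by (subst has_integral_spike_finite_eq[of "{0}"]) (auto simp: powr_realpow exp_minus field_simps)
qed

lemma expint: "(\<lambda>t::real. exp(-t) * (1 + t^k)) integrable_on {0..}"
proof -
  have "((\<lambda>t::real. t^k * exp(-t) + t^0 * exp(-t)) has_integral (fact k + fact 0)) {0..}"
    by (intro has_integral_add tk_integral)
  then show ?thesis unfolding integrable_on_def
    by (auto simp: algebra_simps)
qed

lemma good_integrable: assumes "good f"
  shows "(\<lambda>t. of_real (exp(-t)) * f t) absolutely_integrable_on {0..}"
proof -
  obtain C k where Ck: "\<And>t. t\<ge>0 \<Longrightarrow> norm (f t) \<le> C * (1+t)^k" and c: "continuous_on {0..} f"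
    using assms unfolding good_def by blast
  have C0: "C \<ge> 0" using Ck[of 0] by (simp add: order_trans[OF norm_ge_zero])
  show ?thesis
  proof (rule measurable_bounded_by_integrable_imp_absolutely_integrable)
    show "(\<lambda>t. complex_of_real (exp (- t)) * f t) \<in> borel_measurable (lebesgue_on {0..})"
      by (intro continuous_imp_measurable_on_sets_lebesgue continuous_intros c) auto
    show "{0::real..} \<in> sets lebesgue" by auto
    show "(\<lambda>t. (C * 2^k) * (exp(-t) * (1 + t^k))) integrable_on {0..}"
      by (intro integrable_on_mult_right expint)
    fix t :: real assume t: "t \<in> {0..}"
    have "norm (complex_of_real (exp (- t)) * f t) = exp (-t) * norm (f t)"
      by (simp add: norm_mult)
    also have "\<dots> \<le> exp(-t) * (C * (1+t)^k)" using Ck t by (intro mult_left_mono) auto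
    also have "\<dots> \<le> exp(-t) * (C * (2^k * (1 + t^k)))" using pow_bound[of t k] t C0
      by (intro mult_left_mono) auto
    finally show "norm (complex_of_real (exp (- t)) * f t) \<le> (C * 2^k) * (exp(-t) * (1 + t^k))"
      by (simp add: algebra_simps)
  qed
qed

definition Mi :: "(real \<Rightarrow> complex) \<Rightarrow> complex" where
  "Mi f = integral {0..} (\<lambda>t. of_real (exp(-t)) * f t)"

lemma Mi: "good f \<Longrightarrow> ((\<lambda>t. of_real (exp(-t)) * f t) has_integral Mi f) {0..}"
  unfolding Mi_def using good_integrable set_lebesgue_integral_eq_integral(1) has_integral_integral
  by blast

lemma good_const: "good (\<lambda>t. c)" by (rule goodI[where C="norm c" and k=0]) auto

lemma good_t: "good (\<lambda>t. of_real t)"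
  by (rule goodI[where C=1 and k=1]) (auto intro!: continuous_intros)

lemma good_bound: assumes "good f" obtains C k where "C \<ge> 0" "\<And>t. t \<ge> 0 \<Longrightarrow> norm (f t) \<le> C*(1+t)^k"
proof -
  obtain C k where Ck: "\<And>t. t\<ge>0 \<Longrightarrow> norm (f t) \<le> C * (1+t)^k"
    using assms unfolding good_def by blast
  have C0: "C \<ge> 0" using Ck[of 0] by (simp add: order_trans[OF norm_ge_zero])
  show ?thesis using that C0 Ck by blast
qed

lemma good_cont: "good f \<Longrightarrow> continuous_on {0..} f" unfolding good_def by blast

lemma good_add: assumes "good f" "good g" shows "good (\<lambda>t. f t + g t)"
proof -
  obtain C1 k1 where 1: "C1 \<ge> 0" "\<And>t. t \<ge> 0 \<Longrightarrow> norm (f t) \<le> C1*(1+t)^k1" using assms(1) good_bound by blast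
  obtain C2 k2 where 2: "C2 \<ge> 0" "\<And>t. t \<ge> 0 \<Longrightarrow> norm (g t) \<le> C2*(1+t)^k2" using assms(2) good_bound by blast
  show ?thesis
  proof (rule goodI[where C="C1+C2" and k="k1+k2"])
    show "continuous_on {0..} (\<lambda>t. f t + g t)" using assms by (intro continuous_intros good_cont)
    fix t :: real assume t: "t \<ge> 0"
    have a: "(1+t)^k1 \<le> (1+t)^(k1+k2)" "(1+t)^k2 \<le> (1+t)^(k1+k2)" using t by (auto intro!: power_increasing)
    have "norm (f t + g t) \<le> norm (f t) + norm (g t)" by (rule norm_triangle_ineq)
    also have "\<dots> \<le> C1*(1+t)^k1 + C2*(1+t)^k2" using 1 2 t by (intro add_mono) auto
    also have "\<dots> \<le> C1*(1+t)^(k1+k2) + C2*(1+t)^(k1+k2)" using a 1 2 by (intro add_mono mult_left_mono) auto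
    finally show "norm (f t + g t) \<le> (C1+C2)*(1+t)^(k1+k2)" by (simp add: algebra_simps)
  qed
qed

lemma good_mult: assumes "good f" "good g" shows "good (\<lambda>t. f t * g t)"
proof -
  obtain C1 k1 where 1: "C1 \<ge> 0" "\<And>t. t \<ge> 0 \<Longrightarrow> norm (f t) \<le> C1*(1+t)^k1" using assms(1) good_bound by blast
  obtain C2 k2 where 2: "C2 \<ge> 0" "\<And>t. t \<ge> 0 \<Longrightarrow> norm (g t) \<le> C2*(1+t)^k2" using assms(2) good_bound by blast
  show ?thesis
  proof (rule goodI[where C="C1*C2" and k="k1+k2"])
    show "continuous_on {0..} (\<lambda>t. f t * g t)" using assms by (intro continuous_intros good_cont)
    fix t :: real assume t: "t \<ge> 0"
    have "norm (f t * g t) = norm (f t) * norm (g t)" by (simp add: norm_mult)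
    also have "\<dots> \<le> (C1*(1+t)^k1) * (C2*(1+t)^k2)" using 1 2 t by (intro mult_mono) auto
    finally show "norm (f t * g t) \<le> (C1*C2)*(1+t)^(k1+k2)" by (simp add: algebra_simps power_add)
  qed
qed

lemma good_uminus: assumes "good f" shows "good (\<lambda>t. - f t)"
  using assms unfolding good_def by (auto intro!: continuous_intros)

lemma good_diff: "good f \<Longrightarrow> good g \<Longrightarrow> good (\<lambda>t. f t - g t)"
  using good_add[of f "\<lambda>t. - g t"] good_uminus[of g] by simp

lemma good_cnj: assumes "good f" shows "good (\<lambda>t. cnj (f t))"
  using assms unfolding good_def by (auto intro!: continuous_intros)

lemma good_sum: "finite A \<Longrightarrow> (\<And>i. i \<in> A \<Longrightarrow> good (f i)) \<Longrightarrow> good (\<lambda>t. \<Sum>i\<in>A. f i t)"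
  by (induction A rule: finite_induct) (auto intro: good_add good_const)

lemma good_pow: "good (\<lambda>t. (of_real t :: complex) ^ k)"
  by (induction k) (auto intro: good_mult good_t good_const)

lemma good_cmult: "good f \<Longrightarrow> good (\<lambda>t. c * f t)"
  by (rule good_mult[OF good_const])

lemma MiI: "((\<lambda>t. of_real (exp(-t)) * f t) has_integral y) {0..} \<Longrightarrow> Mi f = y"
  by (simp add: Mi_def integral_unique)

lemma Mi_cong: "(\<And>t. t \<ge> 0 \<Longrightarrow> f t = g t) \<Longrightarrow> Mi f = Mi g"
  unfolding Mi_def by (intro integral_cong) auto

lemma Mi_add: assumes "good f" "good g" shows "Mi (\<lambda>t. f t + g t) = Mi f + Mi g"
  by (rule MiI, rule has_integral_eq[OF _ has_integral_add[OF Mi[OF assms(1)] Mi[OF assms(2)]]])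
     (simp add: algebra_simps)

lemma Mi_diff: assumes "good f" "good g" shows "Mi (\<lambda>t. f t - g t) = Mi f - Mi g"
  by (rule MiI, rule has_integral_eq[OF _ has_integral_diff[OF Mi[OF assms(1)] Mi[OF assms(2)]]])
     (simp add: algebra_simps)

lemma Mi_cmult: assumes "good f" shows "Mi (\<lambda>t. c * f t) = c * Mi f"
  by (rule MiI, rule has_integral_eq[OF _ has_integral_mult_right[OF Mi[OF assms(1)], of c]])
     (simp add: algebra_simps)

lemma Mi_sum: "finite A \<Longrightarrow> (\<And>i. i \<in> A \<Longrightarrow> good (f i)) \<Longrightarrow> Mi (\<lambda>t. \<Sum>i\<in>A. f i t) = (\<Sum>i\<in>A. Mi (f i))"
  by (rule MiI, rule has_integral_eq[OF _ has_integral_sum[of A "\<lambda>i t. of_real (exp(-t)) * f i t"]])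
     (auto simp: sum_distrib_left intro: Mi)

lemma Mi_cnj: assumes "good f" shows "Mi (\<lambda>t. cnj (f t)) = cnj (Mi f)"
  by (rule MiI, rule has_integral_eq[OF _ has_integral_linear[OF Mi[OF assms(1)] bounded_linear_cnj]])
     auto

lemma Mi_pow: "Mi (\<lambda>t. of_real t ^ k) = fact k"
proof -
  have "((\<lambda>t. of_real (t^k * exp(-t)) :: complex) has_integral of_real (fact k)) {0..}"
    using has_integral_linear[OF tk_integral bounded_linear_of_real] by (simp add: o_def)
  then show ?thesis by (intro MiI) (auto simp: mult.commute elim: has_integral_eq[rotated])
qed

lemma Mi_nonneg: assumes "good f" "\<And>t. t \<ge> 0 \<Longrightarrow> Im (f t) = 0 \<and> Re (f t) \<ge> 0"
  shows "Im (Mi f) = 0 \<and> Re (Mi f) \<ge> 0"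
proof
  have "((\<lambda>t::real. 0::real) has_integral Im (Mi f)) {0..}"
  proof (rule has_integral_eq[OF _ has_integral_linear[OF Mi[OF assms(1)] bounded_linear_Im]])
    fix t :: real assume "t \<in> {0..}"
    then show "(Im \<circ> (\<lambda>t. complex_of_real (exp (- t)) * f t)) t = 0" using assms(2)[of t] by simp
  qed
  then show "Im (Mi f) = 0" by simp
  have "((\<lambda>t. exp(-t) * Re (f t)) has_integral Re (Mi f)) {0..}"
    by (rule has_integral_eq[OF _ has_integral_linear[OF Mi[OF assms(1)] bounded_linear_Re]]) auto
  then show "Re (Mi f) \<ge> 0"
    by (rule has_integral_nonneg) (use assms(2) in auto)
qed

lemma binom_id: "(n+1) * (n+1 choose j) + n * (n-1 choose j) = (2*n+1) * (n choose j) + j * (n choose (j-1))"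
proof (cases j)
  case 0 then show ?thesis by simp
next
  case (Suc i)
  show ?thesis
  proof (cases n)
    case 0 then show ?thesis using Suc by (cases i) auto
  next
    case (Suc m)
    define a where "a = n choose i"
    define b where "b = n choose Suc i"
    define c where "c = m choose i"
    define d where "d = m choose Suc i"
    have B: "b = c + d" unfolding b_def c_def d_def Suc by simp
    have A: "n+1 choose Suc i = a + b" unfolding a_def b_def by simp
    have D: "(n - i) * a = n * c" unfolding a_def c_def using binomial_absorb_comp[of n i] Suc by simp
    have E: "(n+1) * a = (n - i) * a + (i+1) * a"
    proof (cases "i \<le> n")
      case True then show ?thesis by (simp add: algebra_simps)
    next
      case False then have "a = 0" unfolding a_def by simp
      then show ?thesis by simp
    qed
    have "(n+1) * (n+1 choose j) + n * (n-1 choose j) = (n+1)*a + (n+1)*b + n*d"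
      using A \<open>j = Suc i\<close> Suc d_def by (simp add: algebra_simps)
    also have "\<dots> = (n-i)*a + (i+1)*a + (n+1)*b + n*d" using E by simp
    also have "\<dots> = n*c + n*d + (i+1)*a + (n+1)*b" using D by simp
    also have "\<dots> = (2*n+1) * b + (i+1)*a" using B by (simp add: algebra_simps)
    also have "\<dots> = (2*n+1) * (n choose j) + j * (n choose (j-1))" using \<open>j = Suc i\<close> a_def b_def by simp
    finally show ?thesis .
  qed
qed

lemma phi_ext: "n \<le> N \<Longrightarrow> phi z n = (\<Sum>k=0..N. of_nat (n choose k) * (-z)^k / of_nat (fact k))"
  unfolding phi_def by (rule sum.mono_neutral_left) auto

lemma zphi: "z * phi z n = (\<Sum>j=0..Suc n. - of_nat (j * (n choose (j-1))) * (-z)^j / of_nat (fact j))"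
proof -
  have "(\<Sum>j=0..Suc n. - of_nat (j * (n choose (j-1))) * (-z)^j / of_nat (fact j))
     = (\<Sum>j=0..n. - of_nat (Suc j * (n choose j)) * (-z)^(Suc j) / of_nat (fact (Suc j)))"
    by (subst sum.atLeast0_atMost_Suc_shift) (simp only: o_def diff_Suc_1 mult_zero_left of_nat_0 minus_zero div_0 add_0_left)
  also have "\<dots> = (\<Sum>j=0..n. z * (of_nat (n choose j) * (-z)^j / of_nat (fact j)))"
  proof (rule sum.cong[OF refl])
    fix j
    have nz: "(of_nat (Suc j)::complex) \<noteq> 0" "(1 + of_nat j :: complex) \<noteq> 0" "(of_nat (fact j)::complex) \<noteq> 0"
      by (metis nat.distinct(1) of_nat_eq_0_iff, metis of_nat_Suc nat.distinct(1) of_nat_eq_0_iff add.commute,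
          simp)
    have f: "(of_nat (fact (Suc j)) :: complex) = of_nat (Suc j) * of_nat (fact j)"
      by (simp only: fact_Suc of_nat_mult of_nat_id)
    show "- of_nat (Suc j * (n choose j)) * (-z)^(Suc j) / of_nat (fact (Suc j)) = z * (of_nat (n choose j) * (-z)^j / of_nat (fact j))"
    proof -
      have "- of_nat (Suc j * (n choose j)) * (-z)^(Suc j) / (of_nat (Suc j) * of_nat (fact j))
         = of_nat (Suc j) * (z * (of_nat (n choose j) * (-z)^j)) / (of_nat (Suc j) * of_nat (fact j))"
        by (simp only: of_nat_mult power_Suc) (simp del: of_nat_Suc of_nat_fact add: algebra_simps)
      also have "\<dots> = z * (of_nat (n choose j) * (-z)^j) / of_nat (fact j)"
        by (rule mult_divide_mult_cancel_left[OF nz(1)])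
      finally show ?thesis unfolding f by simp
    qed
  qed
  also have "\<dots> = z * phi z n" unfolding phi_def by (simp add: sum_distrib_left)
  finally show ?thesis by simp
qed

lemma phi_rec: "z * phi z n = - of_nat (n+1) * phi z (n+1) + of_nat (2*n+1) * phi z n - of_nat n * phi z (n-1)"
proof -
  have e1: "of_nat (n+1) * phi z (n+1) = (\<Sum>j=0..Suc n. of_nat ((n+1) * (n+1 choose j)) * (-z)^j / of_nat (fact j))"
    by (simp only: phi_def sum_distrib_left of_nat_mult mult.assoc times_divide_eq_right Suc_eq_plus1)
  have e2: "of_nat (2*n+1) * phi z n = (\<Sum>j=0..Suc n. of_nat ((2*n+1) * (n choose j)) * (-z)^j / of_nat (fact j))"
    by (simp only: phi_ext[of n "Suc n", OF le_SucI[OF order_refl]] sum_distrib_left of_nat_mult mult.assoc times_divide_eq_right)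
  have e3: "of_nat n * phi z (n-1) = (\<Sum>j=0..Suc n. of_nat (n * (n-1 choose j)) * (-z)^j / of_nat (fact j))"
    by (simp only: phi_ext[of "n-1" "Suc n", OF le_SucI[OF diff_le_self]] sum_distrib_left of_nat_mult mult.assoc times_divide_eq_right)
  have "- of_nat (n+1) * phi z (n+1) + of_nat (2*n+1) * phi z n - of_nat n * phi z (n-1)
      = (\<Sum>j=0..Suc n. (- of_nat ((n+1) * (n+1 choose j)) + of_nat ((2*n+1) * (n choose j)) - of_nat (n * (n-1 choose j))) * (-z)^j / of_nat (fact j))"
    unfolding mult_minus_left e1 e2 e3
    by (simp only: sum_negf[symmetric] sum.distrib[symmetric] sum_subtractf[symmetric])
       (rule sum.cong[OF refl], simp add: divide_inverse ring_distribs)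
  also have "\<dots> = (\<Sum>j=0..Suc n. - of_nat (j * (n choose (j-1))) * (-z)^j / of_nat (fact j))"
  proof (rule sum.cong[OF refl])
    fix j
    have "(of_nat ((n+1) * (n+1 choose j) + n * (n-1 choose j)) :: complex) = of_nat ((2*n+1) * (n choose j) + j * (n choose (j-1)))"
      by (subst binom_id) rule
    then have "- of_nat ((n+1) * (n+1 choose j)) + of_nat ((2*n+1) * (n choose j)) - of_nat (n * (n-1 choose j))
       = (- of_nat (j * (n choose (j-1))) :: complex)"
      unfolding of_nat_add by (simp add: algebra_simps)
    then show "(- of_nat ((n+1) * (n+1 choose j)) + of_nat ((2*n+1) * (n choose j)) - of_nat (n * (n-1 choose j))) * (-z)^j / of_nat (fact j)
       = - of_nat (j * (n choose (j-1))) * (-z)^j / of_nat (fact j)" by simp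
  qed
  also have "\<dots> = z * phi z n" by (rule zphi[symmetric])
  finally show ?thesis by simp
qed

definition P :: "nat \<Rightarrow> real \<Rightarrow> complex" where "P n t = phi (of_real t) n"

lemma P_poly: "P n t = (\<Sum>k=0..n. (of_nat (n choose k) * (-1)^k / of_nat (fact k)) * (of_real t)^k)"
  unfolding P_def phi_def by (rule sum.cong) (auto simp: power_minus[of "complex_of_real t"])

lemma good_P: "good (P n)"
proof -
  have "good (\<lambda>t. \<Sum>k=0..n. (of_nat (n choose k) * (-1)^k / of_nat (fact k)) * (of_real t)^k)"
    by (intro good_sum good_cmult good_pow) auto
  then show ?thesis by (simp add: P_poly[abs_def])
qed

lemma Mi_P: "Mi (P n) = (if n = 0 then 1 else 0)"
proof -
  have "Mi (P n) = Mi (\<lambda>t. \<Sum>k=0..n. (of_nat (n choose k) * (-1)^k / of_nat (fact k)) * (of_real t)^k)"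
    by (simp add: P_poly[abs_def])
  also have "\<dots> = (\<Sum>k=0..n. Mi (\<lambda>t. (of_nat (n choose k) * (-1)^k / of_nat (fact k)) * (of_real t)^k))"
    by (rule Mi_sum) (simp, rule good_cmult, rule good_pow)
  also have "\<dots> = (\<Sum>k=0..n. (of_nat (n choose k) * (-1)^k / of_nat (fact k)) * fact k)"
    by (simp only: Mi_cmult[OF good_pow] Mi_pow)
  also have "\<dots> = (\<Sum>k\<le>n. (-1)^k * of_nat (n choose k))"
    by (simp add: atLeast0AtMost mult.commute)
  also have "\<dots> = (if n = 0 then 1 else 0)"
    using choose_alternating_sum[of n, where 'a=complex] by auto
  finally show ?thesis .
qed

lemma P_rec: "of_real t * P n t = - of_nat (n+1) * P (n+1) t + of_nat (2*n+1) * P n t - of_nat n * P (n-1) t"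
  unfolding P_def by (rule phi_rec)

definition G :: "nat \<Rightarrow> nat \<Rightarrow> complex" where "G m n = Mi (\<lambda>t. P m t * P n t)"

lemma G_sym: "G m n = G n m"
  unfolding G_def by (simp add: mult.commute)

lemma Mi_tPP: "Mi (\<lambda>t. of_real t * P m t * P n t) = - of_nat (m+1) * G (m+1) n + of_nat (2*m+1) * G m n - of_nat m * G (m-1) n"
proof -
  have "Mi (\<lambda>t. of_real t * P m t * P n t) = Mi (\<lambda>t. (- of_nat (m+1)) * (P (m+1) t * P n t) + of_nat (2*m+1) * (P m t * P n t) - of_nat m * (P (m-1) t * P n t))"
    by (rule Mi_cong) (simp add: P_rec algebra_simps)
  also have "\<dots> = - of_nat (m+1) * G (m+1) n + of_nat (2*m+1) * G m n - of_nat m * G (m-1) n"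
    unfolding G_def
    by (simp add: Mi_diff Mi_add Mi_cmult good_add good_cmult good_mult good_P good_diff)
  finally show ?thesis .
qed

lemma G_delta: "G m n = (if m = n then 1 else 0)"
proof (induction m arbitrary: n rule: less_induct)
  case (less m)
  show ?case
  proof (cases m)
    case 0
    have "G 0 n = Mi (P n)" unfolding G_def by (rule Mi_cong) (simp add: P_def phi_def)
    then show ?thesis using 0 by (simp add: Mi_P)
  next
    case (Suc k)
    have IH1: "\<And>n. G k n = (if k = n then 1 else 0)" using less Suc by auto
    have IH0: "\<And>n. G (k-1) n = (if k-1 = n then 1 else 0)" using less Suc by auto
    have "Mi (\<lambda>t. of_real t * P k t * P n t) = Mi (\<lambda>t. of_real t * P n t * P k t)"
      by (rule Mi_cong) (simp add: algebra_simps)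
    then have eq: "- of_nat (k+1) * G (k+1) n + of_nat (2*k+1) * G k n - of_nat k * G (k-1) n
       = - of_nat (n+1) * G k (n+1) + of_nat (2*n+1) * G k n - of_nat n * G k (n-1)"
      unfolding Mi_tPP by (simp add: G_sym)
    define d :: "nat \<Rightarrow> nat \<Rightarrow> complex" where "d a b = (if a = b then 1 else 0)" for a b
    have key: "of_nat (k+1) * G (k+1) n = of_nat (2*k+1) * d k n - of_nat k * d (k-1) n + of_nat (n+1) * d k (n+1) - of_nat (2*n+1) * d k n + of_nat n * d k (n-1)"
      using eq unfolding IH1 IH0 d_def[symmetric] by (simp add: algebra_simps)
    have "of_nat (k+1) * G (k+1) n = of_nat (k+1) * d (k+1) n"
    proof -
      consider "n = k+1" | "n = k" | "n+1 = k" | "n \<noteq> k+1" "n \<noteq> k" "n+1 \<noteq> k" by blast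
      then show ?thesis
      proof cases
        case 1 then show ?thesis unfolding key d_def by simp
      next
        case 2 then show ?thesis unfolding key d_def by (cases k) simp_all
      next
        case 3
        then have kk: "k = Suc n" by simp
        have "d k n = 0" "d (k-1) n = 1" "d k (n+1) = 1" "d k (n-1) = 0" "d (k+1) n = 0" by (auto simp: d_def kk)
        moreover have "(of_nat k :: complex) = of_nat (n+1)" by (simp add: kk)
        ultimately show ?thesis using key by simp
      next
        case 4
        have "k \<noteq> n - 1 \<or> n = 0" using 4 by auto
        then show ?thesis unfolding key d_def using 4 by auto
      qed
    qed
    then have "of_nat (k+1) * G (k+1) n = of_nat (k+1) * (if k+1 = n then 1 else 0)" unfolding d_def by simp
    then show ?thesis using Suc by (simp del: of_nat_Suc)
  qed
qed

lemma dist_bound: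
  assumes "z \<notin> complex_of_real ` {0..}"
  obtains d where "d > 0" "\<And>t. t \<ge> 0 \<Longrightarrow> norm (complex_of_real t - z) \<ge> d"
proof (cases "Im z = 0")
  case True
  have "Re z < 0"
  proof (rule ccontr)
    assume "\<not> Re z < 0"
    then have "z = complex_of_real (Re z)" "Re z \<in> {0..}" using True by (auto simp: complex_eq_iff)
    then show False using assms by blast
  qed
  show ?thesis
  proof (rule that[of "- Re z"])
    show "0 < - Re z" using \<open>Re z < 0\<close> by simp
    fix t :: real assume t: "t \<ge> 0"
    have "- Re z \<le> \<bar>Re (complex_of_real t - z)\<bar>" using t by simp
    also have "\<dots> \<le> norm (complex_of_real t - z)" by (rule abs_Re_le_cmod)
    finally show "- Re z \<le> norm (complex_of_real t - z)" .
  qed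
next
  case False
  show ?thesis
  proof (rule that[of "\<bar>Im z\<bar>"])
    show "0 < \<bar>Im z\<bar>" using False by simp
    fix t :: real assume t: "t \<ge> 0"
    have "\<bar>Im z\<bar> = \<bar>Im (complex_of_real t - z)\<bar>" by simp
    also have "\<dots> \<le> norm (complex_of_real t - z)" by (rule abs_Im_le_cmod)
    finally show "\<bar>Im z\<bar> \<le> norm (complex_of_real t - z)" .
  qed
qed

definition gz :: "complex \<Rightarrow> real \<Rightarrow> complex" where "gz z t = 1 / (complex_of_real t - z)"

lemma gz_nz: "z \<notin> complex_of_real ` {0..} \<Longrightarrow> t \<ge> 0 \<Longrightarrow> complex_of_real t - z \<noteq> 0"
  by auto

lemma good_gz: assumes "z \<notin> complex_of_real ` {0..}" shows "good (gz z)"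
proof -
  obtain d where d: "d > 0" "\<And>t. t \<ge> 0 \<Longrightarrow> norm (complex_of_real t - z) \<ge> d"
    using dist_bound[OF assms] by blast
  show ?thesis
  proof (rule goodI[where C="1/d" and k=0])
    show "continuous_on {0..} (gz z)" unfolding gz_def
      by (intro continuous_intros) (use gz_nz[OF assms] in auto)
    fix t :: real assume t: "t \<ge> 0"
    have "norm (gz z t) = 1 / norm (complex_of_real t - z)" by (simp add: gz_def norm_divide)
    also have "\<dots> \<le> 1 / d" using d(1) d(2)[OF t]
      by (intro frac_le) auto
    finally show "norm (gz z t) \<le> 1/d * (1+t)^0" by simp
  qed
qed

lemma tgz: assumes "z \<notin> complex_of_real ` {0..}" "t \<ge> 0"
  shows "of_real t * gz z t = 1 + z * gz z t"
  using gz_nz[OF assms] by (simp add: gz_def field_simps)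

definition U :: "complex \<Rightarrow> nat \<Rightarrow> complex" where "U z x = Mi (\<lambda>t. P x t * gz z t)"

lemma P_cnj: "cnj (P n t) = P n t"
  by (simp add: P_poly)

lemma L0_gen: "L0 v x = - of_nat (x+1) * v (x+1) + of_nat (2*x+1) * v x - of_nat x * v (x-1)"
  by (simp add: L0_def)

lemma U_eq: assumes z: "z \<notin> complex_of_real ` {0..}"
  shows "L0 (U z) x = chi0 x + z * U z x"
proof -
  have gP: "\<And>n. good (\<lambda>t. P n t * gz z t)" by (intro good_mult good_P good_gz z)
  have "L0 (U z) x = Mi (\<lambda>t. - of_nat (x+1) * (P (x+1) t * gz z t) + of_nat (2*x+1) * (P x t * gz z t) - of_nat x * (P (x-1) t * gz z t))"
    unfolding L0_gen U_def
    by (simp add: Mi_diff Mi_add Mi_cmult good_add good_cmult good_diff gP)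
  also have "\<dots> = Mi (\<lambda>t. P x t + z * (P x t * gz z t))"
  proof (rule Mi_cong)
    fix t :: real assume t: "t \<ge> 0"
    have "- of_nat (x+1) * (P (x+1) t * gz z t) + of_nat (2*x+1) * (P x t * gz z t) - of_nat x * (P (x-1) t * gz z t)
        = (of_real t * P x t) * gz z t" unfolding P_rec by (simp add: algebra_simps)
    also have "\<dots> = P x t * (of_real t * gz z t)" by simp
    also have "\<dots> = P x t + z * (P x t * gz z t)" unfolding tgz[OF z t] by (simp add: algebra_simps)
    finally show "- of_nat (x+1) * (P (x+1) t * gz z t) + of_nat (2*x+1) * (P x t * gz z t) - of_nat x * (P (x-1) t * gz z t)
        = P x t + z * (P x t * gz z t)" .
  qed
  also have "\<dots> = Mi (P x) + z * U z x"
    unfolding U_def by (simp add: Mi_add Mi_cmult good_cmult good_P gP)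
  also have "\<dots> = chi0 x + z * U z x" by (simp add: Mi_P chi0_def)
  finally show ?thesis .
qed

lemma U_bessel: assumes z: "z \<notin> complex_of_real ` {0..}"
  shows "(\<Sum>x<N. (norm (U z x))^2) \<le> Re (Mi (\<lambda>t. gz z t * cnj (gz z t)))"
proof -
  define g where "g = gz z"
  define c where "c = U z"
  define S where "S t = (\<Sum>x<N. c x * P x t)" for t
  have gg: "good g" unfolding g_def by (rule good_gz[OF z])
  have gP: "\<And>n. good (\<lambda>t. P n t * g t)" by (intro good_mult good_P gg)
  have gS: "good S" unfolding S_def by (intro good_sum good_cmult good_P) auto
  have gcS: "good (\<lambda>t. cnj (S t))" by (rule good_cnj[OF gS])
  have gcg: "good (\<lambda>t. cnj (g t))" by (rule good_cnj[OF gg])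
  define A where "A = (\<Sum>x<N. c x * cnj (c x))"
  have cS: "cnj (S t) = (\<Sum>x<N. cnj (c x) * P x t)" for t
    unfolding S_def by (simp add: P_cnj)
  have c_def': "c x = Mi (\<lambda>t. P x t * g t)" for x unfolding c_def U_def g_def ..
  have I1: "Mi (\<lambda>t. g t * cnj (S t)) = A"
  proof -
    have "Mi (\<lambda>t. g t * cnj (S t)) = Mi (\<lambda>t. \<Sum>x<N. cnj (c x) * (P x t * g t))"
      by (rule Mi_cong) (simp add: cS sum_distrib_left algebra_simps)
    also have "\<dots> = (\<Sum>x<N. cnj (c x) * c x)"
      by (subst Mi_sum) (auto simp: Mi_cmult gP c_def' intro: good_cmult)
    finally show ?thesis unfolding A_def by (simp add: mult.commute)
  qed
  have I2: "Mi (\<lambda>t. S t * cnj (g t)) = A"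
  proof -
    have "Mi (\<lambda>t. S t * cnj (g t)) = Mi (\<lambda>t. cnj (g t * cnj (S t)))"
      by (rule Mi_cong) simp
    also have "\<dots> = cnj A" using I1 Mi_cnj[of "\<lambda>t. g t * cnj (S t)"] gg gcS by (simp add: good_mult)
    also have "\<dots> = A" unfolding A_def by (simp add: mult.commute)
    finally show ?thesis .
  qed
  have I3: "Mi (\<lambda>t. S t * cnj (S t)) = A"
  proof -
    have "Mi (\<lambda>t. S t * cnj (S t)) = Mi (\<lambda>t. \<Sum>x<N. \<Sum>y<N. (c x * cnj (c y)) * (P x t * P y t))"
      by (rule Mi_cong) (simp add: cS S_def sum_product algebra_simps P_cnj)
    also have "\<dots> = (\<Sum>x<N. \<Sum>y<N. (c x * cnj (c y)) * G x y)"
      unfolding G_def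
      by (subst Mi_sum, simp, intro good_sum good_cmult good_mult good_P, simp)
         (rule sum.cong[OF refl], subst Mi_sum, simp, intro good_sum good_cmult good_mult good_P,
          rule sum.cong[OF refl], rule Mi_cmult, intro good_mult good_P)
    also have "\<dots> = A" unfolding G_delta A_def by (simp add: if_distrib cong: if_cong)
    finally show ?thesis .
  qed
  have "Mi (\<lambda>t. (g t - S t) * cnj (g t - S t)) = Mi (\<lambda>t. g t * cnj (g t) - g t * cnj (S t) - S t * cnj (g t) + S t * cnj (S t))"
    by (rule Mi_cong) (simp add: algebra_simps)
  also have "\<dots> = Mi (\<lambda>t. g t * cnj (g t)) - A - A + A"
    using I1 I2 I3 gg gS gcS gcg
    by (simp add: Mi_add Mi_diff good_add good_diff good_mult)
  finally have E: "Mi (\<lambda>t. (g t - S t) * cnj (g t - S t)) = Mi (\<lambda>t. g t * cnj (g t)) - A" by simp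
  have "Re (Mi (\<lambda>t. (g t - S t) * cnj (g t - S t))) \<ge> 0"
  proof -
    have "Im (Mi (\<lambda>t. (g t - S t) * cnj (g t - S t))) = 0 \<and> Re (Mi (\<lambda>t. (g t - S t) * cnj (g t - S t))) \<ge> 0"
    proof (rule Mi_nonneg)
      show "good (\<lambda>t. (g t - S t) * cnj (g t - S t))" using gg gS by (intro good_mult good_cnj good_diff)
      fix t :: real
      show "Im ((g t - S t) * cnj (g t - S t)) = 0 \<and> 0 \<le> Re ((g t - S t) * cnj (g t - S t))"
        by (simp only: complex_norm_square[symmetric]) simp
    qed
    then show ?thesis by simp
  qed
  then have "Re A \<le> Re (Mi (\<lambda>t. g t * cnj (g t)))" unfolding E by simp
  moreover have "Re A = (\<Sum>x<N. (norm (c x))^2)" unfolding A_def by (simp add: complex_mult_cnj cmod_power2)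
  ultimately show ?thesis unfolding c_def g_def by simp
qed

lemma U_l2: assumes z: "z \<notin> complex_of_real ` {0..}" shows "l2 (U z)"
  unfolding l2_def
proof (rule bounded_imp_summable)
  fix n show "(\<Sum>k\<le>n. (norm (U z k))^2) \<le> Re (Mi (\<lambda>t. gz z t * cnj (gz z t)))"
    using U_bessel[OF z, of "Suc n"] by (simp add: lessThan_Suc_atMost)
qed simp

definition nsq :: "(nat \<Rightarrow> complex) \<Rightarrow> real" where "nsq a = (\<Sum>x. (norm (a x))^2)"
definition ip :: "(nat \<Rightarrow> complex) \<Rightarrow> (nat \<Rightarrow> complex) \<Rightarrow> complex" where
  "ip a b = (\<Sum>x. a x * cnj (b x))"

lemma sq_add_le: "(norm (u + v :: complex))^2 \<le> 2 * (norm u)^2 + 2 * (norm v)^2"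
proof -
  have "(norm (u+v))^2 \<le> (norm u + norm v)^2" by (intro power_mono norm_triangle_ineq) auto
  also have "\<dots> \<le> 2 * (norm u)^2 + 2 * (norm v)^2"
  proof -
    have "(norm u + norm v)^2 + (norm u - norm v)^2 = 2*(norm u)^2 + 2*(norm v)^2"
      by (simp add: power2_eq_square algebra_simps)
    moreover have "(norm u - norm v)^2 \<ge> 0" by simp
    ultimately show ?thesis by linarith
  qed
  finally show ?thesis .
qed

lemma l2_add: "l2 a \<Longrightarrow> l2 b \<Longrightarrow> l2 (\<lambda>x. a x + b x)"
  unfolding l2_def
  by (rule summable_comparison_test'[where g="\<lambda>x. 2 * (norm (a x))^2 + 2 * (norm (b x))^2" and N=0])
     (auto intro: summable_add summable_mult sq_add_le)

lemma l2_scale: "l2 a \<Longrightarrow> l2 (\<lambda>x. c * a x)"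
  unfolding l2_def by (simp add: norm_mult power_mult_distrib summable_mult)

lemma l2_uminus: "l2 a \<Longrightarrow> l2 (\<lambda>x. - a x)"
  unfolding l2_def by simp

lemma l2_diff: "l2 a \<Longrightarrow> l2 b \<Longrightarrow> l2 (\<lambda>x. a x - b x)"
  using l2_add[of a "\<lambda>x. - b x"] l2_uminus[of b] by simp

lemma l2_bounded_mult: "l2 a \<Longrightarrow> (\<And>x. norm (f x) \<le> 1) \<Longrightarrow> l2 (\<lambda>x. f x * a x)"
  unfolding l2_def
  by (rule summable_comparison_test'[where g="\<lambda>x. (norm (a x))^2" and N=0])
     (auto simp: norm_mult power_mult_distrib intro!: mult_left_le_one_le power_le_one)

lemma l2_finite: "(\<And>x. x \<ge> N \<Longrightarrow> a x = 0) \<Longrightarrow> l2 a"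
  unfolding l2_def by (rule summable_finite[of "{..<N}"]) auto

lemma nsq_nonneg: assumes "l2 a" shows "nsq a \<ge> 0"
proof -
  have s: "summable (\<lambda>x. (norm (a x))^2)" using assms unfolding l2_def by auto
  show ?thesis unfolding nsq_def by (rule suminf_nonneg[OF s]) simp
qed

lemma l2norm_sq: assumes "l2 a" shows "(l2norm a)^2 = nsq a"
  unfolding l2norm_def nsq_def by (rule real_sqrt_pow2[OF nsq_nonneg[OF assms, unfolded nsq_def]])

lemma l2norm_nonneg: "l2 a \<Longrightarrow> l2norm a \<ge> 0" unfolding l2norm_def using nsq_nonneg[unfolded nsq_def] by simp

lemma nsq_add_le: assumes "l2 a" "l2 b" shows "nsq (\<lambda>x. a x + b x) \<le> 2 * nsq a + 2 * nsq b"
proof -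
  have s: "summable (\<lambda>x. (norm (a x))^2)" "summable (\<lambda>x. (norm (b x))^2)" using assms unfolding l2_def by auto
  have "nsq (\<lambda>x. a x + b x) \<le> (\<Sum>x. 2 * (norm (a x))^2 + 2 * (norm (b x))^2)"
    unfolding nsq_def using l2_add[OF assms] unfolding l2_def
    by (intro suminf_le sq_add_le summable_add summable_mult s) auto
  also have "\<dots> = 2 * nsq a + 2 * nsq b" unfolding nsq_def
    by (subst suminf_add[symmetric]) (use s in \<open>auto intro: summable_mult simp: suminf_mult\<close>)
  finally show ?thesis .
qed

lemma nsq_zero: assumes "l2 a" "nsq a = 0" shows "a x = 0"
  using assms suminf_eq_zero_iff[of "\<lambda>x. (norm (a x))^2"] unfolding nsq_def l2_def by auto

lemma prod_le_sq: fixes x y :: real assumes "x \<ge> 0" "y \<ge> 0" shows "x * y \<le> x^2 + y^2"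
proof -
  have "2*x*y \<le> x^2 + y^2" by (rule sum_squares_bound)
  moreover have "x*y \<ge> 0" using assms by simp
  ultimately show ?thesis by linarith
qed

lemma cs_summable: "l2 a \<Longrightarrow> l2 b \<Longrightarrow> summable (\<lambda>x. norm (a x) * norm (b x))"
  unfolding l2_def
  by (rule summable_comparison_test'[where g="\<lambda>x. (norm (a x))^2 + (norm (b x))^2" and N=0])
     (auto intro!: summable_add prod_le_sq)

lemma cs_bound: assumes "l2 a" "l2 b"
  shows "(\<Sum>x. norm (a x) * norm (b x)) \<le> l2norm a * l2norm b"
proof (rule suminf_le_const[OF cs_summable[OF assms]])
  fix n
  have "(\<Sum>x<n. norm (a x) * norm (b x)) = (\<Sum>x<n. \<bar>norm (a x)\<bar> * \<bar>norm (b x)\<bar>)" by simp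
  also have "\<dots> \<le> L2_set (\<lambda>x. norm (a x)) {..<n} * L2_set (\<lambda>x. norm (b x)) {..<n}"
    by (rule L2_set_mult_ineq)
  also have "\<dots> \<le> l2norm a * l2norm b"
    unfolding L2_set_def l2norm_def using assms unfolding l2_def
    using nsq_nonneg[OF assms(1)] nsq_nonneg[OF assms(2)] unfolding nsq_def
    by (intro mult_mono real_sqrt_le_mono sum_le_suminf) (auto simp: sum_nonneg)
  finally show "(\<Sum>x<n. norm (a x) * norm (b x)) \<le> l2norm a * l2norm b" .
qed

lemma ip_summable: "l2 a \<Longrightarrow> l2 b \<Longrightarrow> summable (\<lambda>x. a x * cnj (b x))"
  by (rule summable_norm_cancel) (simp add: norm_mult cs_summable)

lemma ip_bound: assumes "l2 a" "l2 b" shows "norm (ip a b) \<le> l2norm a * l2norm b"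
proof -
  have "norm (ip a b) \<le> (\<Sum>x. norm (a x * cnj (b x)))"
    unfolding ip_def by (rule summable_norm) (simp add: norm_mult cs_summable assms)
  also have "\<dots> = (\<Sum>x. norm (a x) * norm (b x))" by (simp add: norm_mult)
  also have "\<dots> \<le> l2norm a * l2norm b" by (rule cs_bound[OF assms])
  finally show ?thesis .
qed

lemma ip_self: assumes "l2 a" shows "ip a a = of_real (nsq a)"
proof -
  have "ip a a = (\<Sum>x. of_real ((norm (a x))^2))" unfolding ip_def by (simp add: complex_mult_cnj cmod_power2)
  also have "\<dots> = of_real (nsq a)" unfolding nsq_def using assms unfolding l2_def by (rule suminf_of_real[symmetric])
  finally show ?thesis .
qed

lemma ip_diff_left: "l2 a \<Longrightarrow> l2 c \<Longrightarrow> l2 b \<Longrightarrow> ip (\<lambda>x. a x - c x) b = ip a b - ip c b"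
  unfolding ip_def by (subst suminf_diff) (auto simp: ip_summable algebra_simps)

lemma ip_diff_right: "l2 a \<Longrightarrow> l2 b \<Longrightarrow> l2 e \<Longrightarrow> ip a (\<lambda>x. b x - e x) = ip a b - ip a e"
  unfolding ip_def by (subst suminf_diff) (auto simp: ip_summable algebra_simps)

lemma ip_scale_left: "l2 a \<Longrightarrow> l2 b \<Longrightarrow> ip (\<lambda>x. k * a x) b = k * ip a b"
  unfolding ip_def by (subst suminf_mult[symmetric]) (auto simp: ip_summable algebra_simps)

lemma l2norm_eq: "l2 a \<Longrightarrow> l2norm a = sqrt (nsq a)" unfolding l2norm_def nsq_def by simp

lemma l2_conv_nsq: assumes "l2 u" "\<And>n. l2 (vs n)" "(\<lambda>n. nsq (\<lambda>x. vs n x - u x)) \<longlonglongrightarrow> 0"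
  shows "l2_conv vs u"
  unfolding l2_conv_def using assms
proof (intro conjI)
  have "(\<lambda>n. sqrt (nsq (\<lambda>x. vs n x - u x))) \<longlonglongrightarrow> sqrt 0" by (intro tendsto_intros assms)
  then show "(\<lambda>n. l2norm (\<lambda>x. vs n x - u x)) \<longlonglongrightarrow> 0" unfolding l2norm_def nsq_def by simp
qed auto

lemma l2_conv_nsqD: assumes "l2_conv vs u" shows "(\<lambda>n. nsq (\<lambda>x. vs n x - u x)) \<longlonglongrightarrow> 0"
proof -
  have l: "l2 (\<lambda>x. vs n x - u x)" for n using assms l2_diff unfolding l2_conv_def by blast
  have "(\<lambda>n. (l2norm (\<lambda>x. vs n x - u x))^2) \<longlonglongrightarrow> 0^2"
    using assms unfolding l2_conv_def by (intro tendsto_intros) auto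
  then show ?thesis using l2norm_sq[OF l] by simp
qed

lemma l2_conv_diff: assumes "l2_conv as a" "l2_conv bs b"
  shows "l2_conv (\<lambda>n x. as n x - bs n x) (\<lambda>x. a x - b x)"
proof (rule l2_conv_nsq)
  have la: "l2 a" "\<And>n. l2 (as n)" and lb: "l2 b" "\<And>n. l2 (bs n)" using assms unfolding l2_conv_def by auto
  show "l2 (\<lambda>x. a x - b x)" by (intro l2_diff la lb)
  show "\<And>n. l2 (\<lambda>x. as n x - bs n x)" by (intro l2_diff la lb)
  have A: "(\<lambda>n. 2 * nsq (\<lambda>x. as n x - a x) + 2 * nsq (\<lambda>x. - (bs n x - b x))) \<longlonglongrightarrow> 2 * 0 + 2 * 0"
    using l2_conv_nsqD[OF assms(1)] l2_conv_nsqD[OF assms(2)] unfolding nsq_def by (intro tendsto_intros) (auto simp: norm_minus_commute)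
  have A0: "(\<lambda>n. 2 * nsq (\<lambda>x. as n x - a x) + 2 * nsq (\<lambda>x. - (bs n x - b x))) \<longlonglongrightarrow> 0"
    using A by simp
  show "(\<lambda>n. nsq (\<lambda>x. as n x - bs n x - (a x - b x))) \<longlonglongrightarrow> 0"
  proof (rule Lim_null_comparison[OF _ A0], rule always_eventually, rule allI)
    fix n
    have "nsq (\<lambda>x. as n x - bs n x - (a x - b x)) = nsq (\<lambda>x. (as n x - a x) + (- (bs n x - b x)))"
      by (simp add: algebra_simps)
    also have "\<dots> \<le> 2 * nsq (\<lambda>x. as n x - a x) + 2 * nsq (\<lambda>x. - (bs n x - b x))"
      by (intro nsq_add_le l2_diff l2_uminus la lb)
    finally show "norm (nsq (\<lambda>x. as n x - bs n x - (a x - b x))) \<le> 2 * nsq (\<lambda>x. as n x - a x) + 2 * nsq (\<lambda>x. - (bs n x - b x))"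
      using nsq_nonneg[OF l2_diff[OF l2_diff[OF la(2) lb(2)] l2_diff[OF la(1) lb(1)]]] by simp
  qed
qed

lemma ip_cont: assumes "l2_conv as a" "l2_conv bs b"
  shows "(\<lambda>n. ip (as n) (bs n)) \<longlonglongrightarrow> ip a b"
proof -
  have la: "l2 a" "\<And>n. l2 (as n)" and lb: "l2 b" "\<And>n. l2 (bs n)" using assms unfolding l2_conv_def by auto
  define p where "p n = l2norm (\<lambda>x. as n x - a x)" for n
  define q where "q n = l2norm (\<lambda>x. bs n x - b x)" for n
  have p: "p \<longlonglongrightarrow> 0" and q: "q \<longlonglongrightarrow> 0" using assms unfolding l2_conv_def p_def q_def by auto
  have B: "(\<lambda>n. p n * q n + p n * l2norm b + l2norm a * q n) \<longlonglongrightarrow> 0 * 0 + 0 * l2norm b + l2norm a * 0"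
    by (intro tendsto_intros p q)
  have B0: "(\<lambda>n. p n * q n + p n * l2norm b + l2norm a * q n) \<longlonglongrightarrow> 0" using B by simp
  have "(\<lambda>n. ip (as n) (bs n) - ip a b) \<longlonglongrightarrow> 0"
  proof (rule Lim_null_comparison[OF _ B0], rule always_eventually, rule allI)
    fix n
    define da where "da x = as n x - a x" for x
    define db where "db x = bs n x - b x" for x
    have lda: "l2 da" unfolding da_def by (intro l2_diff la)
    have ldb: "l2 db" unfolding db_def by (intro l2_diff lb)
    have "ip (as n) (bs n) - ip a b = ip da db + ip da b + ip a db"
    proof -
      have "ip da db = ip (as n) db - ip a db" unfolding da_def by (rule ip_diff_left) (use la ldb in auto)
      moreover have "ip da b = ip (as n) b - ip a b" unfolding da_def by (rule ip_diff_left) (use la lb in auto)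
      moreover have "ip (as n) db = ip (as n) (bs n) - ip (as n) b" unfolding db_def by (rule ip_diff_right) (use la lb in auto)
      ultimately show ?thesis by simp
    qed
    also have "norm \<dots> \<le> norm (ip da db + ip da b) + norm (ip a db)" by (rule norm_triangle_ineq)
    also have "\<dots> \<le> norm (ip da db) + norm (ip da b) + norm (ip a db)" using norm_triangle_ineq[of "ip da db" "ip da b"] by simp
    also have "\<dots> \<le> p n * q n + p n * l2norm b + l2norm a * q n"
      unfolding p_def q_def da_def[symmetric] db_def[symmetric]
      by (intro add_mono ip_bound lda ldb la lb)
    finally show "norm (ip (as n) (bs n) - ip a b) \<le> p n * q n + p n * l2norm b + l2norm a * q n" .
  qed
  then show ?thesis by (rule LIM_zero_cancel)
qed

lemma tail_tendsto: assumes "summable f"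
  shows "(\<lambda>m. \<Sum>x. if m \<le> x then f x else (0::real)) \<longlonglongrightarrow> 0"
proof -
  have eq: "(\<Sum>x. if m \<le> x then f x else 0) = suminf f - (\<Sum>x<m. f x)" for m
  proof -
    have "(\<lambda>x. f x - (if x \<in> {..<m} then f x else 0)) sums (suminf f - (\<Sum>x\<in>{..<m}. f x))"
      by (intro sums_diff summable_sums assms sums_If_finite_set) auto
    moreover have "(\<lambda>x. f x - (if x \<in> {..<m} then f x else 0)) = (\<lambda>x. if m \<le> x then f x else 0)"
      by (auto simp: fun_eq_iff)
    ultimately show ?thesis by (simp add: sums_iff)
  qed
  have "(\<lambda>m. suminf f - (\<Sum>x<m. f x)) \<longlonglongrightarrow> suminf f - suminf f"
    by (intro tendsto_intros summable_LIMSEQ assms)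
  then show ?thesis unfolding eq by simp
qed

lemma L0_partial:
  "(\<Sum>x<Suc N. L0 v x * cnj (v x)) =
     (\<Sum>x<N. of_nat (x+1) * ((v (x+1) - v x) * cnj (v (x+1) - v x))) + of_nat (N+1) * (v N - v (N+1)) * cnj (v N)"
proof (induction N)
  case 0 then show ?case by (simp add: L0_def algebra_simps)
next
  case (Suc N)
  have "(\<Sum>x<Suc (Suc N). L0 v x * cnj (v x)) = (\<Sum>x<Suc N. L0 v x * cnj (v x)) + L0 v (Suc N) * cnj (v (Suc N))"
    by simp
  also have "\<dots> = (\<Sum>x<N. of_nat (x+1) * ((v (x+1) - v x) * cnj (v (x+1) - v x))) + of_nat (N+1) * (v N - v (N+1)) * cnj (v N)
       + L0 v (Suc N) * cnj (v (Suc N))" unfolding Suc ..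
  also have "\<dots> = (\<Sum>x<Suc N. of_nat (x+1) * ((v (x+1) - v x) * cnj (v (x+1) - v x))) + of_nat (Suc N+1) * (v (Suc N) - v (Suc N+1)) * cnj (v (Suc N))"
    by (simp add: L0_def algebra_simps)
  finally show ?case .
qed

lemma sqrt_tendsto0: fixes f :: "nat \<Rightarrow> real" assumes "(\<lambda>n. (f n)^2) \<longlonglongrightarrow> 0" "\<And>n. f n \<ge> 0"
  shows "f \<longlonglongrightarrow> 0"
proof -
  have "(\<lambda>n. sqrt ((f n)^2)) \<longlonglongrightarrow> sqrt 0" by (intro tendsto_intros assms)
  then show ?thesis using assms(2) by simp
qed

lemma dom_decay: assumes "dom_L0 v"
  shows "(\<lambda>n. norm (v n)) \<longlonglongrightarrow> 0" "(\<lambda>n. real n * norm (v n)) \<longlonglongrightarrow> 0"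
proof -
  have s1: "summable (\<lambda>x. (norm (v x))^2)" and s2: "summable (\<lambda>x. (real x)^2 * (norm (v x))^2)"
    using assms unfolding dom_L0_def l2_def by auto
  show "(\<lambda>n. norm (v n)) \<longlonglongrightarrow> 0" by (rule sqrt_tendsto0[OF summable_LIMSEQ_zero[OF s1]]) simp
  show "(\<lambda>n. real n * norm (v n)) \<longlonglongrightarrow> 0"
    by (rule sqrt_tendsto0) (use summable_LIMSEQ_zero[OF s2] in \<open>simp_all add: power_mult_distrib\<close>)
qed

lemma L0_pos: assumes "dom_L0 v" "l2 (L0 v)"
  shows "Im (ip (L0 v) v) = 0 \<and> Re (ip (L0 v) v) \<ge> 0"
proof -
  have lv: "l2 v" using assms unfolding dom_L0_def by auto
  define R where "R N = (\<Sum>x<N. (real x + 1) * (norm (v (x+1) - v x))^2)" for N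
  define B where "B N = of_nat (N+1) * (v N - v (N+1)) * cnj (v N)" for N
  have SRB: "(\<Sum>x<Suc N. L0 v x * cnj (v x)) = of_real (R N) + B N" for N
  proof -
    have h: "\<And>u. u * cnj u = complex_of_real ((norm u)^2)" by (simp add: complex_mult_cnj cmod_power2)
    show ?thesis unfolding L0_partial R_def B_def h of_real_sum by (simp add: algebra_simps)
  qed
  have R0: "R N \<ge> 0" for N unfolding R_def by (intro sum_nonneg) auto
  have lim: "(\<lambda>N. \<Sum>x<Suc N. L0 v x * cnj (v x)) \<longlonglongrightarrow> ip (L0 v) v"
    unfolding ip_def using summable_LIMSEQ[OF ip_summable[OF assms(2) lv]]
    by (rule LIMSEQ_Suc)
  have B0: "B \<longlonglongrightarrow> 0"
  proof -
    have d1: "(\<lambda>n. norm (v n)) \<longlonglongrightarrow> 0" and d2: "(\<lambda>n. real n * norm (v n)) \<longlonglongrightarrow> 0"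
      using dom_decay[OF assms(1)] by auto
    have d3: "(\<lambda>n. norm (v (Suc n))) \<longlonglongrightarrow> 0" using LIMSEQ_Suc[OF d1] .
    have C: "(\<lambda>n. (real n * norm (v n) + norm (v n)) * (norm (v n) + norm (v (Suc n)))) \<longlonglongrightarrow> (0 + 0) * (0 + 0)"
      by (intro tendsto_intros d1 d2 d3)
    show ?thesis
    proof (rule Lim_null_comparison[OF _ C[simplified]], rule always_eventually, rule allI)
      fix n
      have "norm (B n) = (real n + 1) * norm (v n - v (Suc n)) * norm (v n)"
      proof -
        have "norm (of_nat (n+1) :: complex) = real n + 1" by (simp only: norm_of_nat)
        then show ?thesis unfolding B_def by (simp add: norm_mult del: of_nat_Suc)
      qed
      also have "\<dots> \<le> (real n + 1) * (norm (v n) + norm (v (Suc n))) * norm (v n)"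
        by (intro mult_right_mono mult_left_mono norm_triangle_ineq4) auto
      also have "\<dots> = (real n * norm (v n) + norm (v n)) * (norm (v n) + norm (v (Suc n)))"
        by (simp add: algebra_simps)
      finally show "norm (B n) \<le> (real n * norm (v n) + norm (v n)) * (norm (v n) + norm (v (Suc n)))" .
    qed
  qed
  have "(\<lambda>N. Im (of_real (R N) + B N)) \<longlonglongrightarrow> Im (ip (L0 v) v)"
    using tendsto_Im[OF lim] unfolding SRB .
  moreover have "(\<lambda>N. Im (of_real (R N) + B N)) \<longlonglongrightarrow> 0"
    using tendsto_Im[OF B0] by simp
  ultimately have I: "Im (ip (L0 v) v) = 0" using LIMSEQ_unique by blast
  have a: "(\<lambda>N. Re (of_real (R N) + B N)) \<longlonglongrightarrow> Re (ip (L0 v) v)" using tendsto_Re[OF lim] unfolding SRB .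
  have b: "(\<lambda>N. Re (B N)) \<longlonglongrightarrow> Re 0" using tendsto_Re[OF B0] .
  have "(\<lambda>N. Re (of_real (R N) + B N) - Re (B N)) \<longlonglongrightarrow> Re (ip (L0 v) v) - Re 0"
    by (rule tendsto_diff[OF a b])
  then have "(\<lambda>N. R N) \<longlonglongrightarrow> Re (ip (L0 v) v)" by simp
  then have "Re (ip (L0 v) v) \<ge> 0" by (rule LIMSEQ_le_const) (use R0 in auto)
  with I show ?thesis by simp
qed

lemma L0_diff: "L0 (\<lambda>x. a x - b x) = (\<lambda>x. L0 a x - L0 b x)"
  by (rule ext) (simp add: L0_def algebra_simps)

lemma dom_L0_diff: assumes "dom_L0 a" "dom_L0 b" shows "dom_L0 (\<lambda>x. a x - b x)"
  unfolding dom_L0_def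
proof
  show "l2 (\<lambda>x. a x - b x)" using assms unfolding dom_L0_def by (intro l2_diff) auto
  have s: "summable (\<lambda>x. (real x)^2 * (norm (a x))^2)" "summable (\<lambda>x. (real x)^2 * (norm (b x))^2)"
    using assms unfolding dom_L0_def by auto
  show "summable (\<lambda>x. (real x)^2 * (norm (a x - b x))^2)"
  proof (rule summable_comparison_test'[where g="\<lambda>x. 2 * ((real x)^2 * (norm (a x))^2) + 2 * ((real x)^2 * (norm (b x))^2)" and N=0])
    show "summable (\<lambda>x. 2 * ((real x)^2 * (norm (a x))^2) + 2 * ((real x)^2 * (norm (b x))^2))"
      by (intro summable_add summable_mult s)
    fix n :: nat
    have "(norm (a n - b n))^2 \<le> 2 * (norm (a n))^2 + 2 * (norm (- b n))^2" using sq_add_le[of "a n" "- b n"] by simp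
    then have "(real n)^2 * (norm (a n - b n))^2 \<le> (real n)^2 * (2 * (norm (a n))^2 + 2 * (norm (b n))^2)"
      by (intro mult_left_mono) auto
    then show "norm ((real n)^2 * (norm (a n - b n))^2) \<le> 2 * ((real n)^2 * (norm (a n))^2) + 2 * ((real n)^2 * (norm (b n))^2)"
      by (simp add: algebra_simps)
  qed
qed

lemma res_unique:
  assumes z: "z \<notin> complex_of_real ` {0..}"
    and g1: "L0_closure_graph u1 w1" and e1: "\<forall>x. w1 x - z * u1 x = chi0 x"
    and g2: "L0_closure_graph u2 w2" and e2: "\<forall>x. w2 x - z * u2 x = chi0 x"
  shows "u1 = u2"
proof -
  obtain vs1 where v1: "\<And>n. dom_L0 (vs1 n)" "l2_conv vs1 u1" "l2_conv (\<lambda>n. L0 (vs1 n)) w1"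
    using g1 unfolding L0_closure_graph_def by blast
  obtain vs2 where v2: "\<And>n. dom_L0 (vs2 n)" "l2_conv vs2 u2" "l2_conv (\<lambda>n. L0 (vs2 n)) w2"
    using g2 unfolding L0_closure_graph_def by blast
  define ds where "ds n x = vs1 n x - vs2 n x" for n x
  define d where "d x = u1 x - u2 x" for x
  define e where "e x = w1 x - w2 x" for x
  have dd: "dom_L0 (ds n)" for n unfolding ds_def by (intro dom_L0_diff v1 v2)
  have cd: "l2_conv ds d" unfolding ds_def d_def by (intro l2_conv_diff v1 v2)
  have ce: "l2_conv (\<lambda>n. L0 (ds n)) e" unfolding ds_def e_def L0_diff by (intro l2_conv_diff v1 v2)
  have ld: "l2 d" using cd unfolding l2_conv_def by auto
  have lL: "l2 (L0 (ds n))" for n using ce unfolding l2_conv_def by auto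
  have ez: "e = (\<lambda>x. z * d x)" using e1 e2 unfolding e_def d_def by (auto simp: fun_eq_iff algebra_simps)
  have lim: "(\<lambda>n. ip (L0 (ds n)) (ds n)) \<longlonglongrightarrow> ip e d" by (rule ip_cont[OF ce cd])
  have "ip e d = z * of_real (nsq d)" unfolding ez by (simp add: ip_scale_left ld ip_self)
  note lim = lim[unfolded this]
  have pos: "Im (ip (L0 (ds n)) (ds n)) = 0 \<and> Re (ip (L0 (ds n)) (ds n)) \<ge> 0" for n
    by (rule L0_pos[OF dd lL])
  have "(\<lambda>n. Im (ip (L0 (ds n)) (ds n))) \<longlonglongrightarrow> Im (z * of_real (nsq d))" using tendsto_Im[OF lim] .
  then have "(\<lambda>n. (0::real)) \<longlonglongrightarrow> Im (z * of_real (nsq d))" using pos by simp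
  then have "Im (z * of_real (nsq d)) = 0" by (simp add: LIMSEQ_const_iff)
  moreover have "Re (z * of_real (nsq d)) \<ge> 0"
    using tendsto_Re[OF lim] pos by (intro LIMSEQ_le_const) auto
  moreover have "nsq d \<ge> 0" by (rule nsq_nonneg[OF ld])
  ultimately have "nsq d = 0"
  proof -
    assume a: "Im (z * of_real (nsq d)) = 0" "Re (z * of_real (nsq d)) \<ge> 0" "nsq d \<ge> 0"
    show "nsq d = 0"
    proof (rule ccontr)
      assume "nsq d \<noteq> 0"
      then have p: "nsq d > 0" using a(3) by simp
      then have "Im z = 0" "Re z \<ge> 0" using a(1,2) by (auto simp: zero_le_mult_iff)
      then have "z \<in> complex_of_real ` {0..}" by (intro image_eqI[of _ _ "Re z"]) (auto simp: complex_eq_iff)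
      then show False using z by blast
    qed
  qed
  then have "d x = 0" for x by (rule nsq_zero[OF ld])
  then show ?thesis unfolding d_def by (auto simp: fun_eq_iff)
qed

definition chi :: "nat \<Rightarrow> nat \<Rightarrow> real" where
  "chi m x = (if x \<le> m then 1 else if x \<le> 2*m then (real (2*m) - real x) / real m else 0)"

lemma chi_mid: "m \<ge> 1 \<Longrightarrow> m \<le> y \<Longrightarrow> y \<le> 2*m \<Longrightarrow> chi m y = (real (2*m) - real y) / real m"
  unfolding chi_def by (auto simp: field_simps)

lemma chi_01: assumes "m \<ge> 1" shows "0 \<le> chi m x \<and> chi m x \<le> 1"
proof -
  have m: "real m > 0" using assms by simp
  consider "x \<le> m" | "m < x" "x \<le> 2*m" | "2*m < x" by linarith
  then show ?thesis
  proof cases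
    case 2
    have a: "real (2*m) - real x \<ge> 0" "real (2*m) - real x \<le> real m" using 2 by auto
    have "(real (2*m) - real x) / real m \<ge> 0" using a m by simp
    moreover have "(real (2*m) - real x) / real m \<le> 1" using a m by simp
    ultimately show ?thesis unfolding chi_def using 2 by simp
  qed (auto simp: chi_def)
qed

lemma chi_low: "x \<le> m \<Longrightarrow> chi m x = 1" unfolding chi_def by simp
lemma chi_high: "m \<ge> 1 \<Longrightarrow> 2*m \<le> x \<Longrightarrow> chi m x = 0" unfolding chi_def by auto

lemma chi_step: assumes "m \<ge> 1"
  shows "\<bar>real (y+1) * (chi m (y+1) - chi m y)\<bar> \<le> (if m \<le> y then 2 else 0)"
proof (cases "y < m")
  case True then show ?thesis by (simp add: chi_low)
next
  case False
  show ?thesis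
  proof (cases "y < 2*m")
    case True
    have "chi m (y+1) - chi m y = - 1 / real m"
      using chi_mid[OF assms, of y] chi_mid[OF assms, of "y+1"] False True assms by (simp add: field_simps)
    moreover have "real (y+1) \<le> 2 * real m" using True by linarith
    moreover have m: "real m > 0" using assms by simp
    ultimately have "\<bar>real (y+1) * (chi m (y+1) - chi m y)\<bar> = real (y+1) / real m"
      "real (y+1) / real m \<le> 2"
      by (simp_all add: abs_mult divide_le_eq del: of_nat_Suc of_nat_add)
    then show ?thesis using False by simp
  next
    case False2: False
    then show ?thesis using False by (simp add: chi_high[OF assms])
  qed
qed

lemma chi_step': assumes "m \<ge> 1"
  shows "\<bar>real x * (chi m (x-1) - chi m x)\<bar> \<le> (if m \<le> x then 2 else 0)"
proof (cases x)
  case 0 then show ?thesis by simp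
next
  case (Suc y)
  have "\<bar>real (y+1) * (chi m (y+1) - chi m y)\<bar> \<le> (if m \<le> y then 2 else 0)" by (rule chi_step[OF assms])
  then have "\<bar>real x * (chi m (x-1) - chi m x)\<bar> \<le> (if m \<le> y then 2 else 0)"
    using Suc by (simp add: abs_minus_commute right_diff_distrib)
  then show ?thesis using Suc by (auto split: if_splits)
qed

lemma L0_mult: "L0 (\<lambda>x. of_real (f x) * u x) x
   = of_real (f x) * L0 u x - of_nat (x+1) * of_real (f (x+1) - f x) * u (x+1) - of_nat x * of_real (f (x-1) - f x) * u (x-1)"
  unfolding L0_gen by (simp add: algebra_simps)

lemma sq3: "(norm (a + b + c :: complex))^2 \<le> 2 * (norm a)^2 + 4 * (norm b)^2 + 4 * (norm c)^2"
proof -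
  have "(norm (a + (b + c)))^2 \<le> 2 * (norm a)^2 + 2 * (norm (b+c))^2" by (rule sq_add_le)
  also have "\<dots> \<le> 2 * (norm a)^2 + 2 * (2 * (norm b)^2 + 2 * (norm c)^2)" using sq_add_le[of b c] by simp
  finally show ?thesis by (simp add: add.assoc)
qed

lemma exist_graph: assumes z: "z \<notin> complex_of_real ` {0..}"
  shows "L0_closure_graph (U z) (\<lambda>x. chi0 x + z * U z x)"
proof -
  define u where "u = U z"
  define w where "w x = chi0 x + z * u x" for x
  have lu: "l2 u" unfolding u_def by (rule U_l2[OF z])
  have lw: "l2 w" unfolding w_def by (intro l2_add l2_scale lu l2_finite[of 1]) (auto simp: chi0_def)
  have Lu: "L0 u = w" unfolding u_def w_def by (rule ext, rule U_eq[OF z])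
  define vs where "vs n x = of_real (chi (Suc n) x) * u x" for n x
  have vs0: "x \<ge> 2 * Suc n \<Longrightarrow> vs n x = 0" for n x unfolding vs_def by (simp add: chi_high[of "Suc n"])
  have Lvs0: "x \<ge> 2 * Suc n + 1 \<Longrightarrow> L0 (vs n) x = 0" for n x
    unfolding L0_gen using vs0[of n "x+1"] vs0[of n x] vs0[of n "x-1"] by simp
  have lvs: "l2 (vs n)" for n by (rule l2_finite[of "2 * Suc n"]) (rule vs0)
  have dvs: "dom_L0 (vs n)" for n
  proof -
    have "summable (\<lambda>x. (real x)^2 * (norm (vs n x))^2)"
    proof (rule summable_finite[of "{..<2 * Suc n}"])
      fix x assume "x \<notin> {..<2 * Suc n}" then have "vs n x = 0" by (intro vs0) auto
      then show "(real x)^2 * (norm (vs n x))^2 = 0" by simp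
    qed simp
    then show ?thesis unfolding dom_L0_def using lvs by auto
  qed
  have lLvs: "l2 (L0 (vs n))" for n by (rule l2_finite[of "2 * Suc n + 1"]) (rule Lvs0)
  define T where "T f m = (\<Sum>x. if m \<le> x then f x else (0::real))" for f m
  have sT: "summable f \<Longrightarrow> (\<And>x. f x \<ge> 0) \<Longrightarrow> summable (\<lambda>x. if m \<le> x then f x else (0::real))" for f m
    by (rule summable_comparison_test'[where g="\<lambda>x. f x" and N=0]) auto
  have tT: "summable f \<Longrightarrow> (\<lambda>n. T f (Suc n)) \<longlonglongrightarrow> 0" for f
    unfolding T_def by (rule LIMSEQ_Suc[OF tail_tendsto])
  define fu where "fu x = (norm (u x))^2" for x
  define fw where "fw x = (norm (w x))^2" for x
  define fu1 where "fu1 x = (norm (u (Suc x)))^2" for x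
  define fu2 where "fu2 x = (norm (u (x-1)))^2" for x
  have nn: "\<And>x. fu x \<ge> 0" "\<And>x. fw x \<ge> 0" "\<And>x. fu1 x \<ge> 0" "\<And>x. fu2 x \<ge> 0"
    unfolding fu_def fw_def fu1_def fu2_def by auto
  have sfu: "summable fu" using lu unfolding l2_def fu_def .
  have sfw: "summable fw" using lw unfolding l2_def fw_def .
  have sfu1: "summable fu1" unfolding fu1_def using sfu unfolding fu_def by (subst summable_Suc_iff)
  have sfu2: "summable fu2"
  proof -
    have "summable (\<lambda>x. fu2 (Suc x))" unfolding fu2_def using sfu unfolding fu_def by simp
    then show ?thesis by (subst (asm) summable_Suc_iff)
  qed
  have conv1: "l2_conv vs u"
  proof (rule l2_conv_nsq[OF lu lvs])
    show "(\<lambda>n. nsq (\<lambda>x. vs n x - u x)) \<longlonglongrightarrow> 0"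
    proof (rule Lim_null_comparison[OF _ tT[OF sfu]], rule always_eventually, rule allI)
      fix n
      have "nsq (\<lambda>x. vs n x - u x) \<le> T fu (Suc n)" unfolding nsq_def T_def
      proof (rule suminf_le)
        fix x
        show "(norm (vs n x - u x))^2 \<le> (if Suc n \<le> x then fu x else 0)"
        proof (cases "Suc n \<le> x")
          case True
          have "vs n x - u x = of_real (chi (Suc n) x - 1) * u x" unfolding vs_def by (simp add: algebra_simps)
          then have "norm (vs n x - u x) = \<bar>chi (Suc n) x - 1\<bar> * norm (u x)"
            by (simp only: norm_mult norm_of_real)
          also have "\<dots> \<le> 1 * norm (u x)" using chi_01[of "Suc n" x] by (intro mult_right_mono) auto
          finally show ?thesis using True unfolding fu_def by (simp add: power_mono)
        next
          case False then show ?thesis unfolding vs_def by (simp add: chi_low)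
        qed
        show "summable (\<lambda>x. (norm (vs n x - u x))^2)" using l2_diff[OF lvs lu] unfolding l2_def .
        show "summable (\<lambda>x. if Suc n \<le> x then fu x else 0)" by (rule sT[OF sfu nn(1)])
      qed
      then show "norm (nsq (\<lambda>x. vs n x - u x)) \<le> T fu (Suc n)"
        using nsq_nonneg[OF l2_diff[OF lvs lu]] by simp
    qed
  qed
  have conv2: "l2_conv (\<lambda>n. L0 (vs n)) w"
  proof (rule l2_conv_nsq[OF lw lLvs])
    have B: "(\<lambda>n. 2 * T fw (Suc n) + 16 * T fu1 (Suc n) + 16 * T fu2 (Suc n)) \<longlonglongrightarrow> 2 * 0 + 16 * 0 + 16 * 0"
      by (intro tendsto_intros tT sfw sfu1 sfu2)
    show "(\<lambda>n. nsq (\<lambda>x. L0 (vs n) x - w x)) \<longlonglongrightarrow> 0"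
    proof (rule Lim_null_comparison[OF _ B[simplified]], rule always_eventually, rule allI)
      fix n
      define m where "m = Suc n"
      have m1: "m \<ge> 1" unfolding m_def by simp
      define h where "h x = 2 * (if m \<le> x then fw x else 0) + 16 * (if m \<le> x then fu1 x else 0) + 16 * (if m \<le> x then fu2 x else 0)" for x
      have sh: "summable h" unfolding h_def by (intro summable_add summable_mult sT sfw sfu1 sfu2 nn)
      have "nsq (\<lambda>x. L0 (vs n) x - w x) \<le> suminf h" unfolding nsq_def
      proof (rule suminf_le)
        fix x
        define c where "c = chi m"
        have err: "L0 (vs n) x - w x = of_real (c x - 1) * w x
            + (- (of_nat (x+1) * of_real (c (x+1) - c x) * u (x+1)))
            + (- (of_nat x * of_real (c (x-1) - c x) * u (x-1)))"
          unfolding vs_def L0_mult Lu c_def m_def by (simp add: algebra_simps)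
        have e1: "(norm (of_real (c x - 1) * w x))^2 \<le> (if m \<le> x then fw x else 0)"
        proof (cases "m \<le> x")
          case True
          have "norm (of_real (c x - 1) * w x) = \<bar>c x - 1\<bar> * norm (w x)" by (simp only: norm_mult norm_of_real)
          also have "\<dots> \<le> 1 * norm (w x)"
            using chi_01[OF m1, of x] unfolding c_def by (intro mult_right_mono) auto
          finally have "norm (of_real (c x - 1) * w x) \<le> 1 * norm (w x)" .
          then show ?thesis using True unfolding fw_def by (simp add: power_mono)
        next
          case False then show ?thesis unfolding c_def by (simp add: chi_low)
        qed
        have e2: "(norm (- (of_nat (x+1) * of_real (c (x+1) - c x) * u (x+1))))^2 \<le> 4 * (if m \<le> x then fu1 x else 0)"
        proof -
          have "norm (- (of_nat (x+1) * of_real (c (x+1) - c x) * u (x+1))) = \<bar>real (x+1) * (c (x+1) - c x)\<bar> * norm (u (x+1))"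
            by (simp only: norm_minus_cancel norm_mult norm_of_real norm_of_nat abs_mult abs_of_nat)
          also have "\<dots> \<le> (if m \<le> x then 2 else 0) * norm (u (x+1))"
            unfolding c_def by (intro mult_right_mono chi_step m1) auto
          finally have "norm (- (of_nat (x+1) * of_real (c (x+1) - c x) * u (x+1))) \<le> (if m \<le> x then 2 else 0) * norm (u (x+1))" .
          then have "(norm (- (of_nat (x+1) * of_real (c (x+1) - c x) * u (x+1))))^2 \<le> ((if m \<le> x then 2 else 0) * norm (u (x+1)))^2"
            by (intro power_mono) auto
          then show ?thesis unfolding fu1_def by (auto simp: power_mult_distrib split: if_splits)
        qed
        have e3: "(norm (- (of_nat x * of_real (c (x-1) - c x) * u (x-1))))^2 \<le> 4 * (if m \<le> x then fu2 x else 0)"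
        proof -
          have "norm (- (of_nat x * of_real (c (x-1) - c x) * u (x-1))) = \<bar>real x * (c (x-1) - c x)\<bar> * norm (u (x-1))"
            by (simp only: norm_minus_cancel norm_mult norm_of_real norm_of_nat abs_mult abs_of_nat)
          also have "\<dots> \<le> (if m \<le> x then 2 else 0) * norm (u (x-1))"
            unfolding c_def by (intro mult_right_mono chi_step' m1) auto
          finally have "norm (- (of_nat x * of_real (c (x-1) - c x) * u (x-1))) \<le> (if m \<le> x then 2 else 0) * norm (u (x-1))" .
          then have "(norm (- (of_nat x * of_real (c (x-1) - c x) * u (x-1))))^2 \<le> ((if m \<le> x then 2 else 0) * norm (u (x-1)))^2"
            by (intro power_mono) auto
          then show ?thesis unfolding fu2_def by (auto simp: power_mult_distrib split: if_splits)
        qed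
        show "(norm (L0 (vs n) x - w x))^2 \<le> h x"
          unfolding err h_def using sq3 e1 e2 e3
          by (smt (verit))
        show "summable (\<lambda>x. (norm (L0 (vs n) x - w x))^2)" using l2_diff[OF lLvs lw] unfolding l2_def .
        show "summable h" by (rule sh)
      qed
      also have "suminf h = 2 * T fw m + 16 * T fu1 m + 16 * T fu2 m"
        unfolding h_def T_def
        by (subst suminf_add[symmetric], (intro summable_add summable_mult sT sfw sfu1 sfu2 nn)+,
            subst suminf_add[symmetric], (intro summable_add summable_mult sT sfw sfu1 sfu2 nn)+)
           (simp add: suminf_mult sT sfw sfu1 sfu2 nn)
      finally show "norm (nsq (\<lambda>x. L0 (vs n) x - w x)) \<le> 2 * T fw (Suc n) + 16 * T fu1 (Suc n) + 16 * T fu2 (Suc n)"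
        using nsq_nonneg[OF l2_diff[OF lLvs lw]] unfolding m_def by simp
    qed
  qed
  show ?thesis unfolding L0_closure_graph_def u_def[symmetric] w_def[symmetric]
    using dvs conv1 conv2 by blast
qed

lemma psi_eq: assumes z: "z \<notin> complex_of_real ` {0..}" shows "psi z = U z"
  unfolding psi_def
proof (rule the_equality)
  show "\<exists>w. L0_closure_graph (U z) w \<and> (\<forall>x. w x - z * U z x = chi0 x)"
    using exist_graph[OF z] by (intro exI[of _ "\<lambda>x. chi0 x + z * U z x"]) auto
  fix u assume "\<exists>w. L0_closure_graph u w \<and> (\<forall>x. w x - z * u x = chi0 x)"
  then obtain w where "L0_closure_graph u w" "\<forall>x. w x - z * u x = chi0 x" by blast
  then show "u = U z"
    by (rule res_unique[OF z _ _ exist_graph[OF z]]) auto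
qed

theorem mainTheorem8:
  fixes z :: complex and x :: nat
  assumes "z \<notin> complex_of_real ` {0..}"
  shows "((\<lambda>\<eta>::real. exp (- complex_of_real \<eta>) / (complex_of_real \<eta> - z)
            * (phi (complex_of_real \<eta>) x - phi z x)) has_integral xi z x) {0..}"
proof -
  note z = assms
  define F where "F t = P x t * gz z t - phi z x * (P 0 t * gz z t)" for t
  have gF: "good F" unfolding F_def by (intro good_diff good_cmult good_mult good_P good_gz z)
  have "Mi F = U z x - phi z x * U z 0" unfolding F_def U_def
    by (simp add: Mi_diff Mi_cmult good_cmult good_mult good_P good_gz z)
  also have "\<dots> = xi z x" unfolding xi_def psi_eq[OF z] by (simp add: mult.commute)
  finally have MF: "Mi F = xi z x" .
  show ?thesis
  proof (rule has_integral_eq[OF _ Mi[OF gF, unfolded MF]])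
    fix t :: real assume t: "t \<in> {0..}"
    have nz: "complex_of_real t - z \<noteq> 0" using gz_nz[OF z, of t] t by simp
    have "P 0 t = 1" by (simp add: P_def phi_def)
    with nz show "complex_of_real (exp (- t)) * F t = exp (- complex_of_real t) / (complex_of_real t - z)
            * (phi (complex_of_real t) x - phi z x)"
      unfolding F_def gz_def P_def[of x] by (simp add: exp_of_real[symmetric] divide_inverse algebra_simps)
  qed
qed

end
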